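(* Let $(R,+,\cdot)$ be a finite simple additively idempotent semiring with $|R|>2$ for which there exists a finite idempotent sub-irreducible $R$-semimodule, and suppose its greatest element $\infty_R$ is neither left nor right absorbing. Then $(R,+,\cdot)$ has a zero, i.e., $(R,+)$ has a neutral element which is multiplicatively absorbing.
   Context: A semiring is a nonempty set with a commutative semigroup operation $+$ and a semigroup operation $\cdot$ satisfying both distributive laws; simple if its only congruences are the identity and the full relation; additively idempotent if $r+r=r$, with order $x\le y:\Leftrightarrow x+y=y$ and greatest element $\infty_R=\sum_{r\in R}r$. An element $r$ is right absorbing if $sr=r$ for all $s$, left absorbing if $rs=r$ for all $s$, absorbing if both. An $R$-semimodule is a commutative semigroup $(M,+)$ with an action $R\times M\to M$ satisfying $r(sx)=(rs)x$, $(r+s)x=rx+sx$, $r(x+y)=rx+ry$; idempotent if $x+x=x$. A subsemimodule is a subsemigroup closed under the action. $M$ is quasitrivial if $rx=sx$ for all $r,s,x$; id-quasitrivial if $rx=x$ for all $r,x$; sub-irreducible if not quasitrivial and all proper subsemimodules are id-quasitrivial. *)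

theory Defs
  imports Main
begin

definition semiring :: "'a set \<Rightarrow> ('a \<Rightarrow> 'a \<Rightarrow> 'a) \<Rightarrow> ('a \<Rightarrow> 'a \<Rightarrow> 'a) \<Rightarrow> bool" where
  "semiring R add mul \<longleftrightarrow> R \<noteq> {} \<and>
     (\<forall>a\<in>R. \<forall>b\<in>R. add a b \<in> R \<and> mul a b \<in> R) \<and>
     (\<forall>a\<in>R. \<forall>b\<in>R. \<forall>c\<in>R. add (add a b) c = add a (add b c)) \<and>
     (\<forall>a\<in>R. \<forall>b\<in>R. add a b = add b a) \<and>
     (\<forall>a\<in>R. \<forall>b\<in>R. \<forall>c\<in>R. mul (mul a b) c = mul a (mul b c)) \<and>
     (\<forall>a\<in>R. \<forall>b\<in>R. \<forall>c\<in>R. mul a (add b c) = add (mul a b) (mul a c)) \<and>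
     (\<forall>a\<in>R. \<forall>b\<in>R. \<forall>c\<in>R. mul (add a b) c = add (mul a c) (mul b c))"

definition semiring_congruence :: "'a set \<Rightarrow> ('a \<Rightarrow> 'a \<Rightarrow> 'a) \<Rightarrow> ('a \<Rightarrow> 'a \<Rightarrow> 'a) \<Rightarrow> 'a rel \<Rightarrow> bool" where
  "semiring_congruence R add mul \<rho> \<longleftrightarrow> equiv R \<rho> \<and>
     (\<forall>a b c d. (a, b) \<in> \<rho> \<longrightarrow> (c, d) \<in> \<rho> \<longrightarrow>
        (add a c, add b d) \<in> \<rho> \<and> (mul a c, mul b d) \<in> \<rho>)"

definition simple_semiring :: "'a set \<Rightarrow> ('a \<Rightarrow> 'a \<Rightarrow> 'a) \<Rightarrow> ('a \<Rightarrow> 'a \<Rightarrow> 'a) \<Rightarrow> bool" where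
  "simple_semiring R add mul \<longleftrightarrow> semiring R add mul \<and>
     (\<forall>\<rho>. semiring_congruence R add mul \<rho> \<longrightarrow> \<rho> = Id_on R \<or> \<rho> = R \<times> R)"

definition add_idempotent :: "'a set \<Rightarrow> ('a \<Rightarrow> 'a \<Rightarrow> 'a) \<Rightarrow> bool" where
  "add_idempotent R add \<longleftrightarrow> (\<forall>r\<in>R. add r r = r)"

text \<open>Greatest element w.r.t. x \<le> y iff x + y = y (for finite additively idempotent R
  this is the sum of all elements).\<close>
definition greatest_elem :: "'a set \<Rightarrow> ('a \<Rightarrow> 'a \<Rightarrow> 'a) \<Rightarrow> 'a" where
  "greatest_elem R add = (THE z. z \<in> R \<and> (\<forall>r\<in>R. add r z = z))"

definition right_absorbing :: "'a set \<Rightarrow> ('a \<Rightarrow> 'a \<Rightarrow> 'a) \<Rightarrow> 'a \<Rightarrow> bool" where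
  "right_absorbing R mul r \<longleftrightarrow> (\<forall>s\<in>R. mul s r = r)"

definition left_absorbing :: "'a set \<Rightarrow> ('a \<Rightarrow> 'a \<Rightarrow> 'a) \<Rightarrow> 'a \<Rightarrow> bool" where
  "left_absorbing R mul r \<longleftrightarrow> (\<forall>s\<in>R. mul r s = r)"

definition semimodule :: "'a set \<Rightarrow> ('a \<Rightarrow> 'a \<Rightarrow> 'a) \<Rightarrow> ('a \<Rightarrow> 'a \<Rightarrow> 'a) \<Rightarrow>
    'b set \<Rightarrow> ('b \<Rightarrow> 'b \<Rightarrow> 'b) \<Rightarrow> ('a \<Rightarrow> 'b \<Rightarrow> 'b) \<Rightarrow> bool" where
  "semimodule R add mul M madd act \<longleftrightarrow>
     (\<forall>x\<in>M. \<forall>y\<in>M. madd x y \<in> M) \<and>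
     (\<forall>x\<in>M. \<forall>y\<in>M. \<forall>z\<in>M. madd (madd x y) z = madd x (madd y z)) \<and>
     (\<forall>x\<in>M. \<forall>y\<in>M. madd x y = madd y x) \<and>
     (\<forall>r\<in>R. \<forall>x\<in>M. act r x \<in> M) \<and>
     (\<forall>r\<in>R. \<forall>s\<in>R. \<forall>x\<in>M. act r (act s x) = act (mul r s) x) \<and>
     (\<forall>r\<in>R. \<forall>s\<in>R. \<forall>x\<in>M. act (add r s) x = madd (act r x) (act s x)) \<and>
     (\<forall>r\<in>R. \<forall>x\<in>M. \<forall>y\<in>M. act r (madd x y) = madd (act r x) (act r y))"

definition idempotent_semimodule :: "'b set \<Rightarrow> ('b \<Rightarrow> 'b \<Rightarrow> 'b) \<Rightarrow> bool" where
  "idempotent_semimodule M madd \<longleftrightarrow> (\<forall>x\<in>M. madd x x = x)"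

definition subsemimodule :: "'a set \<Rightarrow> 'b set \<Rightarrow> ('b \<Rightarrow> 'b \<Rightarrow> 'b) \<Rightarrow> ('a \<Rightarrow> 'b \<Rightarrow> 'b) \<Rightarrow> 'b set \<Rightarrow> bool" where
  "subsemimodule R M madd act N \<longleftrightarrow> N \<subseteq> M \<and>
     (\<forall>x\<in>N. \<forall>y\<in>N. madd x y \<in> N) \<and> (\<forall>r\<in>R. \<forall>x\<in>N. act r x \<in> N)"

definition quasitrivial :: "'a set \<Rightarrow> 'b set \<Rightarrow> ('a \<Rightarrow> 'b \<Rightarrow> 'b) \<Rightarrow> bool" where
  "quasitrivial R M act \<longleftrightarrow> (\<forall>r\<in>R. \<forall>s\<in>R. \<forall>x\<in>M. act r x = act s x)"

definition id_quasitrivial :: "'a set \<Rightarrow> 'b set \<Rightarrow> ('a \<Rightarrow> 'b \<Rightarrow> 'b) \<Rightarrow> bool" where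
  "id_quasitrivial R M act \<longleftrightarrow> (\<forall>r\<in>R. \<forall>x\<in>M. act r x = x)"

definition sub_irreducible :: "'a set \<Rightarrow> 'b set \<Rightarrow> ('b \<Rightarrow> 'b \<Rightarrow> 'b) \<Rightarrow> ('a \<Rightarrow> 'b \<Rightarrow> 'b) \<Rightarrow> bool" where
  "sub_irreducible R M madd act \<longleftrightarrow> \<not> quasitrivial R M act \<and>
     (\<forall>N. subsemimodule R M madd act N \<and> N \<noteq> M \<longrightarrow> id_quasitrivial R N act)"

end

theory Submission
  imports Defs
begin

lemma top_exists:
  assumes "finite A" "A \<noteq> {}" "A \<subseteq> R" "semiring R add mul" "add_idempotent R add"
  shows "\<exists>t\<in>R. \<forall>a\<in>A. add a t = t"
  using assms(1-3)
proof (induction A rule: finite_ne_induct)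
  case (singleton a) then show ?case using assms(5) unfolding add_idempotent_def by auto
next
  case (insert b A)
  then obtain t where t: "t\<in>R" "\<forall>a\<in>A. add a t = t" by auto
  have b: "b \<in> R" using insert by auto
  have cl: "\<And>a b. a\<in>R \<Longrightarrow> b\<in>R \<Longrightarrow> add a b \<in> R" using assms(4) unfolding semiring_def by blast
  have as: "\<And>a b c. a\<in>R \<Longrightarrow> b\<in>R \<Longrightarrow> c\<in>R \<Longrightarrow> add (add a b) c = add a (add b c)"
    using assms(4) unfolding semiring_def by blast
  have co: "\<And>a b. a\<in>R \<Longrightarrow> b\<in>R \<Longrightarrow> add a b = add b a"
    using assms(4) unfolding semiring_def by blast
  have id: "\<And>a. a\<in>R \<Longrightarrow> add a a = a" using assms(5) unfolding add_idempotent_def by blast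
  show ?case
  proof (intro bexI[of _ "add b t"] ballI)
    fix a assume a: "a \<in> insert b A"
    show "add a (add b t) = add b t"
    proof (cases "a = b")
      case True then show ?thesis using as[of b b t] id[of b] b t by simp
    next
      case False
      then have "a \<in> A" "a \<in> R" using a insert by auto
      then show ?thesis using as[of a b t] as[of b a t] co[of a b] b t by simp
    qed
  qed (use cl b t in auto)
qed

theorem proposition2p24:
  fixes R :: "'a set" and add mul :: "'a \<Rightarrow> 'a \<Rightarrow> 'a"
  assumes "finite R"
    and "simple_semiring R add mul"
    and "add_idempotent R add"
    and "card R > 2"
    and "\<exists>(M :: 'b set) madd act. finite M \<and> semimodule R add mul M madd act \<and>
           idempotent_semimodule M madd \<and> sub_irreducible R M madd act"
    and "\<not> left_absorbing R mul (greatest_elem R add)"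
    and "\<not> right_absorbing R mul (greatest_elem R add)"
  shows "\<exists>z\<in>R. (\<forall>r\<in>R. add z r = r) \<and> (\<forall>r\<in>R. mul z r = z \<and> mul r z = z)"
proof -
  from assms(5) obtain M :: "'b set" and madd act where
    fM: "finite M" and sm: "semimodule R add mul M madd act" and si: "sub_irreducible R M madd act"
    by blast
  have sr: "semiring R add mul" using assms(2) simple_semiring_def by blast
  have Rne: "R \<noteq> {}" using sr semiring_def by blast
  have cl: "\<And>a b. a\<in>R \<Longrightarrow> b\<in>R \<Longrightarrow> add a b \<in> R" and clm: "\<And>a b. a\<in>R \<Longrightarrow> b\<in>R \<Longrightarrow> mul a b \<in> R"
    using sr unfolding semiring_def by blast+
  have as: "\<And>a b c. a\<in>R \<Longrightarrow> b\<in>R \<Longrightarrow> c\<in>R \<Longrightarrow> add (add a b) c = add a (add b c)"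
    using sr unfolding semiring_def by blast
  have co: "\<And>a b. a\<in>R \<Longrightarrow> b\<in>R \<Longrightarrow> add a b = add b a"
    using sr unfolding semiring_def by blast
  have ld: "\<And>a b c. a\<in>R \<Longrightarrow> b\<in>R \<Longrightarrow> c\<in>R \<Longrightarrow> mul a (add b c) = add (mul a b) (mul a c)"
    using sr unfolding semiring_def by blast
  have rd: "\<And>a b c. a\<in>R \<Longrightarrow> b\<in>R \<Longrightarrow> c\<in>R \<Longrightarrow> mul (add a b) c = add (mul a c) (mul b c)"
    using sr unfolding semiring_def by blast
  have idem: "\<And>a. a\<in>R \<Longrightarrow> add a a = a" using assms(3) unfolding add_idempotent_def by blast
  have simple: "\<And>\<rho>. semiring_congruence R add mul \<rho> \<Longrightarrow> \<rho> = Id_on R \<or> \<rho> = R \<times> R"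
    using assms(2) unfolding simple_semiring_def by blast
  have mcl: "\<And>x y. x\<in>M \<Longrightarrow> y\<in>M \<Longrightarrow> madd x y \<in> M"
    and mco: "\<And>x y. x\<in>M \<Longrightarrow> y\<in>M \<Longrightarrow> madd x y = madd y x"
    and acl: "\<And>r x. r\<in>R \<Longrightarrow> x\<in>M \<Longrightarrow> act r x \<in> M"
    and amul: "\<And>r s x. r\<in>R \<Longrightarrow> s\<in>R \<Longrightarrow> x\<in>M \<Longrightarrow> act r (act s x) = act (mul r s) x"
    and aadd: "\<And>r s x. r\<in>R \<Longrightarrow> s\<in>R \<Longrightarrow> x\<in>M \<Longrightarrow> act (add r s) x = madd (act r x) (act s x)"
    and adist: "\<And>r x y. r\<in>R \<Longrightarrow> x\<in>M \<Longrightarrow> y\<in>M \<Longrightarrow> act r (madd x y) = madd (act r x) (act r y)"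
    using sm unfolding semimodule_def by blast+
  have nq: "\<not> quasitrivial R M act" using si sub_irreducible_def by blast
  have sub: "\<And>N. subsemimodule R M madd act N \<Longrightarrow> N \<noteq> M \<Longrightarrow> id_quasitrivial R N act"
    using si unfolding sub_irreducible_def by blast

  obtain T where T: "T \<in> R" "\<forall>r\<in>R. add r T = T"
    using top_exists[OF assms(1) Rne subset_refl sr assms(3)] by blast
  have "greatest_elem R add = T"
    unfolding greatest_elem_def
  proof (rule the_equality)
    show "T\<in>R \<and> (\<forall>r\<in>R. add r T = T)" using T by blast
    fix z assume "z\<in>R \<and> (\<forall>r\<in>R. add r z = z)" then show "z = T" using T co by metis
  qed
  then have notla: "\<not> left_absorbing R mul T" and notra: "\<not> right_absorbing R mul T"
    using assms(6,7) by auto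

  have faith: "\<forall>r\<in>R. \<forall>s\<in>R. (\<forall>x\<in>M. act r x = act s x) \<longrightarrow> r = s"
  proof -
    define \<rho> where "\<rho> = {(r,s). r\<in>R \<and> s\<in>R \<and> (\<forall>x\<in>M. act r x = act s x)}"
    have "semiring_congruence R add mul \<rho>"
      unfolding semiring_congruence_def
    proof
      show "equiv R \<rho>" unfolding equiv_def refl_on_def sym_def trans_def \<rho>_def by auto
      show "\<forall>a b c d. (a, b) \<in> \<rho> \<longrightarrow> (c, d) \<in> \<rho> \<longrightarrow>
        (add a c, add b d) \<in> \<rho> \<and> (mul a c, mul b d) \<in> \<rho>"
      proof (intro allI impI conjI)
        fix a b c d assume ab: "(a, b) \<in> \<rho>" and cd: "(c, d) \<in> \<rho>"
        then show "(add a c, add b d) \<in> \<rho>" unfolding \<rho>_def using cl aadd by auto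
        from ab cd show "(mul a c, mul b d) \<in> \<rho>" unfolding \<rho>_def using clm amul acl
          by (auto simp flip: amul)
      qed
    qed
    then have "\<rho> = Id_on R \<or> \<rho> = R \<times> R" using simple by blast
    moreover have "\<rho> \<noteq> R \<times> R"
    proof
      assume "\<rho> = R \<times> R"
      then have "quasitrivial R M act" unfolding quasitrivial_def \<rho>_def by auto
      with nq show False by blast
    qed
    ultimately have "\<rho> = Id_on R" by blast
    then show ?thesis unfolding \<rho>_def Id_on_def by blast
  qed

  define F where "F = {x\<in>M. \<forall>r\<in>R. act r x = x}"
  have orbit: "{act r z | r. r\<in>R} = M \<or> {act r z | r. r\<in>R} \<subseteq> F" if z: "z\<in>M" for z
  proof -
    let ?N = "{act r z | r. r\<in>R}"
    have "subsemimodule R M madd act ?N" unfolding subsemimodule_def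
    proof (intro conjI ballI)
      show "?N \<subseteq> M" using acl z by auto
      fix x y assume "x \<in> ?N" "y \<in> ?N"
      then obtain r s where "r\<in>R" "s\<in>R" "x = act r z" "y = act s z" by auto
      then show "madd x y \<in> ?N" using aadd[of r s z] cl z by force
    next
      fix t x assume "t \<in> R" "x \<in> ?N"
      then obtain r where "r\<in>R" "x = act r z" by auto
      then show "act t x \<in> ?N" using amul[of t r z] clm \<open>t\<in>R\<close> z by force
    qed
    then show ?thesis using sub[of ?N] acl z unfolding id_quasitrivial_def F_def by auto
  qed

  have Fne: "F \<noteq> {}"
  proof
    assume F0: "F = {}"
    have top: "madd m (act T z) = act T z" if "z\<in>M" "m\<in>M" for z m
    proof -
      obtain r0 where "r0 \<in> R" using Rne by blast
      then have "{act r z | r. r\<in>R} \<noteq> {}" by blast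
      with orbit[OF that(1)] F0 have "{act r z | r. r\<in>R} = M" by blast
      with that obtain r where r: "r\<in>R" "m = act r z" by blast
      then show ?thesis using aadd[of r T z] T that by simp
    qed
    have "left_absorbing R mul T"
      unfolding left_absorbing_def
    proof
      fix s assume s: "s\<in>R"
      have "\<forall>x\<in>M. act (mul T s) x = act T x"
      proof
        fix x assume x: "x\<in>M"
        have 1: "madd (act T x) (act T (act s x)) = act T (act s x)" using top acl s x T by blast
        have 2: "madd (act T (act s x)) (act T x) = act T x" using top acl s x T by blast
        have "act T (act s x) = act T x" using 1 2 mco acl s x T by metis
        then show "act (mul T s) x = act T x" using amul T s x by simp
      qed
      then show "mul T s = T" using faith clm T s by blast
    qed
    with notla show False by blast
  qed

  have hit: "\<exists>r\<in>R. act r z \<in> F" if z: "z\<in>M" for z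
  proof (cases "{act r z | r. r\<in>R} = M")
    case True
    obtain f where "f \<in> F" using Fne by blast
    then have "f \<in> M" unfolding F_def by blast
    with True obtain r where "r\<in>R" "f = act r z" by blast
    then show ?thesis using \<open>f\<in>F\<close> by blast
  next
    case False
    then have "{act r z | r. r\<in>R} \<subseteq> F" using orbit z by blast
    moreover obtain r0 where "r0 \<in> R" using Rne by blast
    ultimately show ?thesis by blast
  qed

  have Ffix: "act r x = x" if "r\<in>R" "x\<in>F" for r x using that unfolding F_def by blast
  have FM: "F \<subseteq> M" unfolding F_def by blast

  have gen: "finite Y \<Longrightarrow> Y \<subseteq> M \<Longrightarrow> \<exists>e0\<in>R. \<forall>x\<in>Y. act e0 x \<in> F" for Y
  proof (induction Y rule: finite_induct)
    case empty then show ?case using Rne by blast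
  next
    case (insert y Y)
    then obtain e0 where e0: "e0\<in>R" "\<forall>x\<in>Y. act e0 x \<in> F" by auto
    have y: "y \<in> M" using insert by auto
    obtain r where r: "r\<in>R" "act r (act e0 y) \<in> F" using hit[of "act e0 y"] acl e0 y by blast
    show ?case
    proof (intro bexI[of _ "mul r e0"] ballI)
      fix x assume "x \<in> insert y Y"
      then show "act (mul r e0) x \<in> F"
      proof
        assume "x = y" then show ?thesis using r amul e0 y by simp
      next
        assume x: "x \<in> Y"
        then have "x \<in> M" using insert by auto
        then have "act (mul r e0) x = act r (act e0 x)" using amul[of r e0 x] r e0 by simp
        also have "\<dots> = act e0 x" using Ffix[of r "act e0 x"] r e0 x by simp
        finally show ?thesis using e0 x by simp
      qed
    qed (use clm r e0 in auto)
  qed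

  define I where "I = {e0\<in>R. \<forall>x\<in>M. act e0 x \<in> F}"
  have Ine: "I \<noteq> {}" using gen[OF fM subset_refl] unfolding I_def by blast
  have IR: "I \<subseteq> R" unfolding I_def by blast
  have TnI: "T \<notin> I"
  proof
    assume "T \<in> I"
    from notra obtain s where s: "s\<in>R" "mul s T \<noteq> T" unfolding right_absorbing_def by blast
    then obtain x where x: "x\<in>M" "act (mul s T) x \<noteq> act T x" using faith clm T by blast
    have "act T x \<in> F" using \<open>T\<in>I\<close> x unfolding I_def by blast
    then have "act s (act T x) = act T x" using Ffix s by blast
    then show False using x amul s T by simp
  qed
  have Iadd: "add a b \<in> I" if "a\<in>I" "b\<in>I" for a b
    unfolding I_def
  proof (intro CollectI conjI ballI)
    show "add a b \<in> R" using that IR cl by blast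
    fix x assume x: "x\<in>M"
    have u: "act a x \<in> F" and v: "act b x \<in> F" using that x unfolding I_def by blast+
    have "act (add a b) x = madd (act a x) (act b x)" using aadd that IR x by blast
    moreover have "madd (act a x) (act b x) \<in> F"
      proof -
        have uM: "act a x \<in> M" and vM: "act b x \<in> M" using u v FM by auto
        have "\<forall>r\<in>R. act r (madd (act a x) (act b x)) = madd (act a x) (act b x)"
          using adist[OF _ uM vM] Ffix u v by simp
        then show ?thesis unfolding F_def using mcl uM vM by blast
      qed
    ultimately show "act (add a b) x \<in> F" by simp
  qed
  have Ilm: "mul t a \<in> I" if "a\<in>I" "t\<in>R" for a t
    unfolding I_def
  proof (intro CollectI conjI ballI)
    show "mul t a \<in> R" using that IR clm by blast
    fix x assume x: "x\<in>M"
    have "act a x \<in> F" using that x unfolding I_def by blast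
    then show "act (mul t a) x \<in> F" using amul[of t a x] Ffix that IR x by auto
  qed
  have Irm: "mul a t \<in> I" if "a\<in>I" "t\<in>R" for a t
    unfolding I_def
  proof (intro CollectI conjI ballI)
    show "mul a t \<in> R" using that IR clm by blast
    fix x assume x: "x\<in>M"
    have "act a (act t x) \<in> F" using that x acl unfolding I_def by blast
    then show "act (mul a t) x \<in> F" using amul[of a t x] that IR x by auto
  qed

  have ac4: "add (add a b) (add c d) = add (add a c) (add b d)"
    if "a\<in>R" "b\<in>R" "c\<in>R" "d\<in>R" for a b c d
  proof -
    have "add (add a b) (add c d) = add a (add b (add c d))" using as that cl by simp
    also have "add b (add c d) = add c (add b d)"
      using as[of b c d] as[of c b d] co[of b c] that by simp
    also have "add a (add c (add b d)) = add (add a c) (add b d)" using as that cl by simp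
    finally show ?thesis .
  qed

  define \<rho> where "\<rho> = {(r,s). r\<in>R \<and> s\<in>R \<and> (\<exists>i\<in>I. \<exists>j\<in>I. add r i = add s j)}"
  have \<rho>trans: "(r,t) \<in> \<rho>" if H: "(r,s) \<in> \<rho>" "(s,t) \<in> \<rho>" for r s t
  proof -
    obtain i j where ij: "i\<in>I" "j\<in>I" "add r i = add s j" "r\<in>R" "s\<in>R" using H(1) unfolding \<rho>_def by blast
    obtain k l where kl: "k\<in>I" "l\<in>I" "add s k = add t l" "t\<in>R" using H(2) unfolding \<rho>_def by blast
    have "add r (add i k) = add (add r i) k" by (rule sym, rule as) (use ij kl IR in auto)
    also have "\<dots> = add (add s j) k" using ij by simp
    also have "\<dots> = add s (add j k)" by (rule as) (use ij kl IR in auto)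
    also have "\<dots> = add s (add k j)" by (rule arg_cong[where f="add s"], rule co) (use ij kl IR in auto)
    also have "\<dots> = add (add s k) j" by (rule sym, rule as) (use ij kl IR in auto)
    also have "\<dots> = add (add t l) j" using kl by simp
    also have "\<dots> = add t (add l j)" by (rule as) (use ij kl IR in auto)
    finally show ?thesis unfolding \<rho>_def using ij kl Iadd by blast
  qed
  have \<rho>mulr: "(mul a c, mul b c) \<in> \<rho>" if H: "(a,b) \<in> \<rho>" "c\<in>R" for a b c
  proof -
    obtain i j where ij: "i\<in>I" "j\<in>I" "add a i = add b j" "a\<in>R" "b\<in>R" using H(1) unfolding \<rho>_def by blast
    have "add (mul a c) (mul i c) = add (mul b c) (mul j c)" proof -
      have "i\<in>R" "j\<in>R" using ij IR by auto
      then show ?thesis using rd[of a i c] rd[of b j c] ij H(2) by metis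
    qed
    then show ?thesis unfolding \<rho>_def using ij Irm H(2) clm by blast
  qed
  have \<rho>mull: "(mul c a, mul c b) \<in> \<rho>" if H: "(a,b) \<in> \<rho>" "c\<in>R" for a b c
  proof -
    obtain i j where ij: "i\<in>I" "j\<in>I" "add a i = add b j" "a\<in>R" "b\<in>R" using H(1) unfolding \<rho>_def by blast
    have "add (mul c a) (mul c i) = add (mul c b) (mul c j)" proof -
      have "i\<in>R" "j\<in>R" using ij IR by auto
      then show ?thesis using ld[of c a i] ld[of c b j] ij H(2) by metis
    qed
    then show ?thesis unfolding \<rho>_def using ij Ilm H(2) clm by blast
  qed
  have "semiring_congruence R add mul \<rho>"
    unfolding semiring_congruence_def
  proof
    show "equiv R \<rho>" unfolding equiv_def refl_on_def sym_def trans_def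
    proof (intro conjI allI impI)
      show "\<rho> \<subseteq> R \<times> R" unfolding \<rho>_def by auto
      show "\<forall>x\<in>R. (x, x) \<in> \<rho>" unfolding \<rho>_def using Ine by auto
      fix x y assume "(x,y) \<in> \<rho>" then obtain i j where "x\<in>R" "y\<in>R" "i\<in>I" "j\<in>I" "add x i = add y j" unfolding \<rho>_def by blast
      then have "add y j = add x i" by simp
      then show "(y,x) \<in> \<rho>" unfolding \<rho>_def using \<open>x\<in>R\<close> \<open>y\<in>R\<close> \<open>i\<in>I\<close> \<open>j\<in>I\<close> by blast
    next
      fix x y z assume "(x,y) \<in> \<rho>" "(y,z) \<in> \<rho>" then show "(x,z) \<in> \<rho>" using \<rho>trans by blast
    qed
    show "\<forall>a b c d. (a, b) \<in> \<rho> \<longrightarrow> (c, d) \<in> \<rho> \<longrightarrow>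
        (add a c, add b d) \<in> \<rho> \<and> (mul a c, mul b d) \<in> \<rho>"
    proof (intro allI impI conjI)
      fix a b c d assume ab: "(a, b) \<in> \<rho>" and cd: "(c, d) \<in> \<rho>"
      obtain i j where ij: "i\<in>I" "j\<in>I" "add a i = add b j" "a\<in>R" "b\<in>R" using ab unfolding \<rho>_def by blast
      obtain k l where kl: "k\<in>I" "l\<in>I" "add c k = add d l" "c\<in>R" "d\<in>R" using cd unfolding \<rho>_def by blast
      have iR: "i\<in>R" "j\<in>R" "k\<in>R" "l\<in>R" using ij kl IR by auto
      have "add (add a c) (add i k) = add (add a i) (add c k)" using ac4[of a c i k] ij kl iR by simp
      also have "\<dots> = add (add b j) (add d l)" using ij kl by simp
      also have "\<dots> = add (add b d) (add j l)" using ac4[of b j d l] ij kl iR by simp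
      finally have "add (add a c) (add i k) = add (add b d) (add j l)" .
      then show "(add a c, add b d) \<in> \<rho>" unfolding \<rho>_def using ij kl Iadd cl by blast
      have "(mul a c, mul b c) \<in> \<rho>" using \<rho>mulr ab kl by blast
      moreover have "(mul b c, mul b d) \<in> \<rho>" using \<rho>mull cd ij by blast
      ultimately show "(mul a c, mul b d) \<in> \<rho>" using \<rho>trans by blast
    qed
  qed
  then have "\<rho> = Id_on R \<or> \<rho> = R \<times> R" using simple by blast
  moreover have "\<rho> \<noteq> R \<times> R"
  proof
    assume all: "\<rho> = R \<times> R"
    obtain e0 where e0: "e0 \<in> I" using Ine by blast
    then have "(T, e0) \<in> \<rho>" using all T IR by auto
    then obtain i j where ij: "i\<in>I" "j\<in>I" "add T i = add e0 j" unfolding \<rho>_def by blast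
    have "add T i = T" using co[of T i] T ij IR by auto
    then have "T = add e0 j" using ij by simp
    then have "T \<in> I" using Iadd e0 ij by simp
    with TnI show False by blast
  qed
  ultimately have rid: "\<rho> = Id_on R" by blast
  have key: "add r e0 = r" if "r\<in>R" "e0\<in>I" for r e0
  proof -
    have "add (add r e0) e0 = add r e0" using as[of r e0 e0] idem[of e0] that IR by auto
    then have "add r e0 = add (add r e0) e0" by simp
    moreover have "add r e0 \<in> R" using that cl IR by auto
    ultimately have "(r, add r e0) \<in> \<rho>" unfolding \<rho>_def using that by blast
    then show ?thesis using rid unfolding Id_on_def by auto
  qed
  obtain e0 where e0: "e0 \<in> I" using Ine by blast
  have single: "a = e0" if "a \<in> I" for a
    using key[of a e0] key[of e0 a] co[of a e0] that e0 IR by auto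
  show ?thesis
  proof (intro bexI[of _ e0] conjI ballI)
    show "e0 \<in> R" using e0 IR by blast
    fix r assume r: "r\<in>R"
    show "add e0 r = r" using key[OF r e0] co[of e0 r] r e0 IR by auto
    show "mul e0 r = e0" using single Irm e0 r by blast
    show "mul r e0 = e0" using single Ilm e0 r by blast
  qed
qed

end
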